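(* Let $K\in\mathbb N$ and let $d_2,\dots,d_{K+1}$ be real numbers. Suppose there exist constants $a,b,c>0$ such that $$d_{k+1}\le\frac ak+b(1+\log k)+c\sum_{\ell=2}^k\frac{d_\ell}{k-\ell+2}\quad\text{for all }k\in[K].$$ Then $$d_{k+1}\le\left(\frac ak+b(1+\log k)\right)\sum_{i=0}^{k-1}\big(2c(1+\log k)\big)^i\quad\text{for all }k\in[K].$$
   Context: $\log$ is the natural logarithm; $[K]=\{1,\dots,K\}$; an empty sum equals $0$. *)

theory Defs
  imports Complex_Main
begin

end

theory Submission
  imports Defs
begin

lemma harm_bound: "n \<ge> 1 \<Longrightarrow> (\<Sum>m=1..n. 1 / real m) \<le> 1 + ln (real n)"
proof (induction n rule: dec_induct)
  case base then show ?case by simp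
next
  case (step n)
  have "ln (real n / real (Suc n)) \<le> real n / real (Suc n) - 1"
    using step.hyps by (intro ln_le_minus_one) auto
  moreover have "ln (real n / real (Suc n)) = ln (real n) - ln (real (Suc n))"
    using step.hyps by (simp add: ln_div)
  moreover have "real n / real (Suc n) - 1 = - 1 / real (Suc n)"
    by (simp add: field_simps)
  ultimately have "1 / real (Suc n) \<le> ln (real (Suc n)) - ln (real n)" by simp
  then show ?case using step.IH step.hyps by simp
qed

lemma geo_shift: "(\<Sum>i=0..n. (x::real) ^ i) = 1 + x * (\<Sum>i<n. x ^ i)"
  by (induction n) (auto simp: algebra_simps)

lemma sum1: "(\<Sum>l=2..k. 1 / (real k - real l + 2)) = (\<Sum>m=2..k. 1 / real m)"
  by (rule sum.reindex_bij_witness[of _ "\<lambda>m. k + 2 - m" "\<lambda>l. k + 2 - l"]) (auto simp: of_nat_diff)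

lemma sum2: "(\<Sum>l=2..k. 1 / (real l - 1)) = (\<Sum>m=1..k-1. 1 / real m)"
  by (rule sum.reindex_bij_witness[of _ "\<lambda>m. m + 1" "\<lambda>l. l - 1"]) (auto simp: of_nat_diff)

lemma sums_le_H:
  assumes "k \<ge> 1"
  shows "(\<Sum>l=2..k. 1 / (real k - real l + 2)) \<le> 1 + ln (real k)"
    and "(\<Sum>l=2..k. 1 / (real l - 1)) \<le> 1 + ln (real k)"
proof -
  have "(\<Sum>m=2..k. 1 / real m) \<le> (\<Sum>m=1..k. 1 / real m)"
    by (rule sum_mono2) auto
  then show "(\<Sum>l=2..k. 1 / (real k - real l + 2)) \<le> 1 + ln (real k)"
    using sum1[of k] harm_bound[OF assms] by linarith
  have "(\<Sum>m=1..k-1. 1 / real m) \<le> (\<Sum>m=1..k. 1 / real m)"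
    by (rule sum_mono2) auto
  then show "(\<Sum>l=2..k. 1 / (real l - 1)) \<le> 1 + ln (real k)"
    using sum2[of k] harm_bound[OF assms] by linarith
qed

theorem mainTheorem14:
  fixes K :: nat and d :: "nat \<Rightarrow> real" and a b c :: real
  assumes "a > 0" and "b > 0" and "c > 0"
    and hyp: "\<And>k. k \<in> {1..K} \<Longrightarrow>
      d (k + 1) \<le> a / real k + b * (1 + ln (real k))
        + c * (\<Sum>l = 2..k. d l / (real k - real l + 2))"
  shows "\<And>k. k \<in> {1..K} \<Longrightarrow>
      d (k + 1) \<le> (a / real k + b * (1 + ln (real k)))
        * (\<Sum>i = 0..k - 1. (2 * c * (1 + ln (real k))) ^ i)"
proof -
  define f where "f j = a / real j + b * (1 + ln (real j))" for j :: nat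
  define x where "x j = 2 * c * (1 + ln (real j))" for j :: nat
  have lnnn: "j \<ge> 1 \<Longrightarrow> ln (real j) \<ge> 0" for j :: nat by simp
  have fpos: "j \<ge> 1 \<Longrightarrow> f j > 0" for j
  proof -
    assume j: "j \<ge> 1"
    have "a / real j > 0" using assms(1) j by simp
    moreover have "b * (1 + ln (real j)) > 0" using assms(2) lnnn[OF j] by simp
    ultimately show "f j > 0" unfolding f_def by simp
  qed
  have xnn: "j \<ge> 1 \<Longrightarrow> x j \<ge> 0" for j
    unfolding x_def using assms(3) lnnn[of j] by simp
  have xmono: "1 \<le> j \<Longrightarrow> j \<le> k \<Longrightarrow> x j \<le> x k" for j k
    unfolding x_def using assms(3) by (simp add: mult_left_mono)
  have main: "k \<in> {1..K} \<longrightarrow> d (k + 1) \<le> f k * (\<Sum>i = 0..k - 1. x k ^ i)" for k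
  proof (induction k rule: less_induct)
    case (less k)
    show ?case
    proof
      assume k: "k \<in> {1..K}"
      define T where "T = (\<Sum>i<k-1. x k ^ i)"
      define D where "D l = real k - real l + 2" for l :: nat
      have Dpos: "l \<in> {2..k} \<Longrightarrow> D l > 0" for l unfolding D_def by auto
      have Tnn: "T \<ge> 0" unfolding T_def using xnn k by (intro sum_nonneg) auto
      have b1: "d l / D l \<le> T * (f (l-1) / D l)" if l: "l \<in> {2..k}" for l
      proof -
        have "l - 1 < k" "l - 1 \<in> {1..K}" using l k by auto
        with less.IH have "d (l - 1 + 1) \<le> f (l-1) * (\<Sum>i = 0..l - 1 - 1. x (l-1) ^ i)"
          by blast
        also have "(\<Sum>i = 0..l - 1 - 1. x (l-1) ^ i) \<le> (\<Sum>i = 0..l - 1 - 1. x k ^ i)"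
          using l xnn[of "l-1"] xmono[of "l-1" k]
          by (intro sum_mono power_mono) auto
        also have "\<dots> \<le> T" unfolding T_def
          using l xnn[of k] by (intro sum_mono2) auto
        finally have "d l \<le> f (l-1) * T"
          using l fpos[of "l-1"] by (auto simp: mult_left_mono)
        then show ?thesis using Dpos[OF l]
          by (simp add: divide_right_mono mult.commute)
      qed
      have b2: "f (l-1) / D l \<le> a / (real k + 1) * (1 / (real l - 1) + 1 / D l)
                  + b * (1 + ln (real k)) * (1 / D l)" if l: "l \<in> {2..k}" for l
      proof -
        have rl: "real (l - 1) = real l - 1" using l by (simp add: of_nat_diff)
        have j: "real l - 1 > 0" using l by auto
        have e1: "a / (real l - 1) / D l = a / (real k + 1) * (1 / (real l - 1) + 1 / D l)"
        proof -
          have sJD: "(real l - 1) + D l = real k + 1" unfolding D_def by simp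
          have "1 / (real l - 1) + 1 / D l = ((real l - 1) + D l) / ((real l - 1) * D l)"
            using j Dpos[OF l] by (simp add: field_simps)
          also have "\<dots> = (real k + 1) / ((real l - 1) * D l)" using sJD by simp
          finally show ?thesis by simp
        qed
        have "ln (real l - 1) \<le> ln (real k)" using j l by simp
        then have e2: "b * (1 + ln (real l - 1)) / D l \<le> b * (1 + ln (real k)) * (1 / D l)"
          using assms(2) Dpos[OF l] by (simp add: divide_right_mono)
        show ?thesis unfolding f_def rl using e1 e2 by (simp add: add_divide_distrib)
      qed
      have "(\<Sum>l=2..k. f (l-1) / D l) \<le> (\<Sum>l=2..k. a / (real k + 1) * (1 / (real l - 1) + 1 / D l)
                  + b * (1 + ln (real k)) * (1 / D l))"
        by (rule sum_mono) (rule b2)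
      also have "\<dots> = a / (real k + 1) * ((\<Sum>l=2..k. 1 / (real l - 1)) + (\<Sum>l=2..k. 1 / D l))
                  + b * (1 + ln (real k)) * (\<Sum>l=2..k. 1 / D l)"
        by (simp only: distrib_left sum.distrib sum_distrib_left)
      also have "\<dots> \<le> a / (real k + 1) * (2 * (1 + ln (real k)))
                  + b * (1 + ln (real k)) * (1 + ln (real k))"
      proof -
        have s1: "(\<Sum>l=2..k. 1 / (real l - 1)) \<le> 1 + ln (real k)"
          and s2: "(\<Sum>l=2..k. 1 / D l) \<le> 1 + ln (real k)"
          using sums_le_H[of k] k unfolding D_def by auto
        have "a / (real k + 1) \<ge> 0" "b * (1 + ln (real k)) \<ge> 0"
          using assms lnnn[of k] k by auto
        then show ?thesis using s1 s2
          by (intro add_mono mult_left_mono) auto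
      qed
      also have "\<dots> \<le> 2 * (1 + ln (real k)) * f k"
      proof -
        have L: "1 + ln (real k) \<ge> 1" using lnnn[of k] k by auto
        have "a / (real k + 1) \<le> a / real k" using assms(1) k
          by (intro divide_left_mono) auto
        then have "a / (real k + 1) * (2 * (1 + ln (real k))) \<le> a / real k * (2 * (1 + ln (real k)))"
          using L by (intro mult_right_mono) auto
        moreover have "b * (1 + ln (real k)) * (1 + ln (real k)) \<le> b * (1 + ln (real k)) * (2 * (1 + ln (real k)))"
          using L assms(2) by (intro mult_left_mono) auto
        ultimately show ?thesis unfolding f_def by (simp add: algebra_simps)
      qed
      finally have B2: "(\<Sum>l=2..k. f (l-1) / D l) \<le> 2 * (1 + ln (real k)) * f k" .
      have "d (k + 1) \<le> f k + c * (\<Sum>l=2..k. d l / D l)"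
        using hyp[OF k] unfolding f_def D_def by simp
      also have "(\<Sum>l=2..k. d l / D l) \<le> (\<Sum>l=2..k. T * (f (l-1) / D l))"
        by (rule sum_mono) (rule b1)
      also have "\<dots> = T * (\<Sum>l=2..k. f (l-1) / D l)" by (simp add: sum_distrib_left)
      also have "\<dots> \<le> T * (2 * (1 + ln (real k)) * f k)"
        using B2 Tnn by (rule mult_left_mono)
      finally have "d (k + 1) \<le> f k + c * (T * (2 * (1 + ln (real k)) * f k))"
        using assms(3) by (simp add: mult_left_mono)
      also have "\<dots> = f k * (1 + x k * T)" unfolding x_def by (simp add: algebra_simps)
      also have "\<dots> = f k * (\<Sum>i = 0..k - 1. x k ^ i)"
        unfolding T_def geo_shift ..
      finally show "d (k + 1) \<le> f k * (\<Sum>i = 0..k - 1. x k ^ i)" .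
    qed
  qed
  fix k assume "k \<in> {1..K}"
  then show "d (k + 1) \<le> (a / real k + b * (1 + ln (real k)))
        * (\<Sum>i = 0..k - 1. (2 * c * (1 + ln (real k))) ^ i)"
    using main[of k] unfolding f_def x_def by simp
qed

end
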